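(* Let $G,K,L,N_r\ge1$. For each $g\in\{1,\dots,G\}$ let $R_g\ge L$, let $\mathbf U_g\in\mathbb C^{N_r\times R_g}$ have orthonormal columns, let $\boldsymbol\Lambda_g\in\mathbb R^{R_g\times R_g}$ be diagonal with positive diagonal entries, and assume $\mathbf U_g^H\mathbf U_{g'}=\mathbf 0$ for all $g\neq g'$ (disjoint clusters). For $k\in\{1,\dots,K\}$ let $\mathbf W_{g,k}\in\mathbb C^{R_g\times L}$ and $\mathbf H_{g,k}=\mathbf U_g\boldsymbol\Lambda_g^{1/2}\mathbf W_{g,k}$. For $\mathbf A\in\mathbb C^{L\times N_r}$ define $$f(\mathbf A)=\mathrm{tr}(\mathbf A\mathbf A^H)\,\max_{g,k}\mathrm{tr}\big((\mathbf A\mathbf H_{g,k}\mathbf H_{g,k}^H\mathbf A^H)^{-1}\big),$$ with $f(\mathbf A)=+\infty$ if some $\mathbf A\mathbf H_{g,k}\mathbf H_{g,k}^H\mathbf A^H$ is singular. Then for every $\mathbf A\in\mathbb C^{L\times N_r}$ there exist matrices $\mathbf C_g\in\mathbb C^{R_g\times L}$, $g=1,\dots,G$, such that $\mathbf A'=\sum_{g=1}^G\mathbf C_g^H\mathbf U_g^H$ satisfies $f(\mathbf A')\le f(\mathbf A)$. In particular, if $\min_{\mathbf A}f(\mathbf A)$ is attained, then it is attained by a matrix of the form $\sum_{g=1}^G\mathbf C_g^H\mathbf U_g^H$ with $\mathbf C_g\in\mathbb C^{R_g\times L}$.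
   Context: $(\cdot)^H$ denotes conjugate transpose; $\mathrm{tr}$ is the trace. The minimization of $f$ over $\mathbf A$ is the aggregation-beamforming design problem (P2). *)

theory Defs
  imports "Jordan_Normal_Form.Schur_Decomposition" "Jordan_Normal_Form.Gauss_Jordan_Elimination"
    "HOL-Library.Extended_Real"
begin

abbreviation cH :: "complex mat \<Rightarrow> complex mat" where
  "cH M \<equiv> mat_adjoint M"

definition mtrace :: "complex mat \<Rightarrow> complex" where
  "mtrace M = (\<Sum>i<dim_row M. M $$ (i, i))"

definition diag_sqrt :: "real mat \<Rightarrow> complex mat" where
  "diag_sqrt D = mat (dim_row D) (dim_col D)
     (\<lambda>(i, j). if i = j then complex_of_real (sqrt (D $$ (i, i))) else 0)"

definition chan :: "(nat \<Rightarrow> complex mat) \<Rightarrow> (nat \<Rightarrow> real mat) \<Rightarrow> (nat \<Rightarrow> nat \<Rightarrow> complex mat)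
    \<Rightarrow> nat \<Rightarrow> nat \<Rightarrow> complex mat" where
  "chan U Lam W g k = U g * diag_sqrt (Lam g) * W g k"

definition tr_inv :: "complex mat \<Rightarrow> ereal" where
  "tr_inv M = (case mat_inverse M of Some B \<Rightarrow> ereal (Re (mtrace B)) | None \<Rightarrow> \<infinity>)"

text \<open>Objective f(A) of problem (P2); indices g in {0..<G}, k in {0..<K}.\<close>
definition fobj :: "nat \<Rightarrow> nat \<Rightarrow> (nat \<Rightarrow> nat \<Rightarrow> complex mat) \<Rightarrow> complex mat \<Rightarrow> ereal" where
  "fobj G K H A =
     (if \<exists>g<G. \<exists>k<K. \<not> invertible_mat (A * H g k * cH (H g k) * cH A) then \<infinity>
      else ereal (Re (mtrace (A * cH A))) *
           Max {tr_inv (A * H g k * cH (H g k) * cH A) | g k. g < G \<and> k < K})"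

fun msum :: "nat \<Rightarrow> nat \<Rightarrow> (nat \<Rightarrow> complex mat) \<Rightarrow> nat \<Rightarrow> complex mat" where
  "msum m n F 0 = 0\<^sub>m m n"
| "msum m n F (Suc G) = msum m n F G + F G"

end

theory Submission
  imports Defs
begin

lemma cH_dims[simp]: "dim_row (cH A) = dim_col A" "dim_col (cH A) = dim_row A"
  by (auto simp: mat_adjoint_def)

lemma cH_carrier[simp]: "A \<in> carrier_mat n m \<Longrightarrow> cH A \<in> carrier_mat m n"
  unfolding carrier_mat_def by simp

lemma cH_index[simp]: "i < dim_col A \<Longrightarrow> j < dim_row A \<Longrightarrow> cH A $$ (i,j) = cnj (A $$ (j,i))"
  by (simp add: mat_adjoint_def mat_of_rows_index)

lemma cH_cH[simp]: "cH (cH A) = A"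
  by (rule eq_matI, auto)

lemma cH_mult: "A \<in> carrier_mat n m \<Longrightarrow> B \<in> carrier_mat m p \<Longrightarrow> cH (A * B) = cH B * cH A"
  apply (rule eq_matI)
  apply (auto simp: scalar_prod_def intro!: sum.cong)
  done

lemma cH_add: "A \<in> carrier_mat n m \<Longrightarrow> B \<in> carrier_mat n m \<Longrightarrow> cH (A + B) = cH A + cH B"
  by (rule eq_matI, auto)

lemma cH_minus: "A \<in> carrier_mat n m \<Longrightarrow> B \<in> carrier_mat n m \<Longrightarrow> cH (A - B) = cH A - cH B"
  by (rule eq_matI, auto)

lemma cH_one[simp]: "cH (1\<^sub>m n) = 1\<^sub>m n"
  by (rule eq_matI, auto)

lemma cH_zero[simp]: "cH (0\<^sub>m n m) = 0\<^sub>m m n"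
  by (rule eq_matI, auto)

lemma trace_nonneg: assumes "B \<in> carrier_mat n m" shows "Re (mtrace (B * cH B)) \<ge> 0"
proof -
  have "Re (mtrace (B * cH B)) = (\<Sum>i<n. \<Sum>k=0..<m. (Re (B $$ (i,k)))\<^sup>2 + (Im (B $$ (i,k)))\<^sup>2)"
    using assms unfolding mtrace_def
    by (auto simp: scalar_prod_def Re_sum complex_mult_cnj intro!: sum.cong)
  also have "\<dots> \<ge> 0" by (intro sum_nonneg) auto
  finally show ?thesis .
qed

lemma mtrace_add: "A \<in> carrier_mat n n \<Longrightarrow> B \<in> carrier_mat n n \<Longrightarrow> mtrace (A + B) = mtrace A + mtrace B"
  unfolding mtrace_def by (auto simp: sum.distrib)

lemma proj_trace:
  assumes P: "P \<in> carrier_mat n n" and hP: "cH P = P" and iP: "P * P = P" and A: "A \<in> carrier_mat m n"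
  shows "Re (mtrace ((A * P) * cH (A * P))) \<le> Re (mtrace (A * cH A))"
proof -
  define Q where "Q = 1\<^sub>m n - P"
  have Q: "Q \<in> carrier_mat n n" using P unfolding Q_def by (rule minus_carrier_mat)
  have hQ: "cH Q = Q" using P hP unfolding Q_def by (subst cH_minus[of _ n n]) auto
  have PQ0: "P * Q = 0\<^sub>m n n"
  proof -
    have "P * Q = P * 1\<^sub>m n - P * P" unfolding Q_def
      by (rule mult_minus_distrib_mat[OF P _ P]) auto
    then show ?thesis using P iP by simp
  qed
  have iQ: "Q * Q = Q"
  proof -
    have "(1\<^sub>m n - P) * Q = 1\<^sub>m n * Q - P * Q"
      by (rule minus_mult_distrib_mat[OF _ P Q]) auto
    then have "Q * Q = 1\<^sub>m n * Q - P * Q" unfolding Q_def by simp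
    also have "\<dots> = Q - 0\<^sub>m n n" using Q PQ0 by simp
    also have "\<dots> = Q" using Q by (intro eq_matI) auto
    finally show ?thesis .
  qed
  have PQ: "P + Q = 1\<^sub>m n" using P unfolding Q_def by auto
  have hA: "cH A \<in> carrier_mat n m" using A by simp
  have e1: "A * P * cH A = (A * P) * cH (A * P)"
  proof -
    have "(A * P) * cH (A * P) = (A * P) * (P * cH A)" using cH_mult[OF A P] hP by simp
    also have "\<dots> = A * P * P * cH A" using assoc_mult_mat[OF mult_carrier_mat[OF A P] P hA] by simp
    also have "A * P * P = A * (P * P)" using assoc_mult_mat[OF A P P] .
    finally show ?thesis using iP by simp
  qed
  have e2: "A * Q * cH A = (A * Q) * cH (A * Q)"
  proof -
    have "(A * Q) * cH (A * Q) = (A * Q) * (Q * cH A)" using cH_mult[OF A Q] hQ by simp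
    also have "\<dots> = A * Q * Q * cH A" using assoc_mult_mat[OF mult_carrier_mat[OF A Q] Q hA] by simp
    also have "A * Q * Q = A * (Q * Q)" using assoc_mult_mat[OF A Q Q] .
    finally show ?thesis using iQ by simp
  qed
  have "A * cH A = A * (P + Q) * cH A" using PQ A by simp
  also have "\<dots> = A * P * cH A + A * Q * cH A"
    using mult_add_distrib_mat[OF A P Q] add_mult_distrib_mat[OF mult_carrier_mat[OF A P] mult_carrier_mat[OF A Q] hA]
    by simp
  finally have "mtrace (A * cH A) = mtrace ((A * P) * cH (A * P)) + mtrace ((A * Q) * cH (A * Q))"
    using e1 e2 mtrace_add[OF mult_carrier_mat[OF mult_carrier_mat[OF A P] cH_carrier[OF mult_carrier_mat[OF A P]]]
      mult_carrier_mat[OF mult_carrier_mat[OF A Q] cH_carrier[OF mult_carrier_mat[OF A Q]]]] by simp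
  moreover have "Re (mtrace ((A * Q) * cH (A * Q))) \<ge> 0"
    using A Q by (intro trace_nonneg[of _ m n]) simp
  ultimately show ?thesis by simp
qed

lemma msum_carrier: "(\<And>g. g < n \<Longrightarrow> F g \<in> carrier_mat m p) \<Longrightarrow> msum m p F n \<in> carrier_mat m p"
  by (induction n) auto

lemma msum_cong: "(\<And>g. g < n \<Longrightarrow> F g = F' g) \<Longrightarrow> msum m p F n = msum m p F' n"
  by (induction n) auto

lemma msum_mult_left:
  assumes A: "A \<in> carrier_mat m q" and F: "\<And>g. g < n \<Longrightarrow> F g \<in> carrier_mat q p"
  shows "msum m p (\<lambda>g. A * F g) n = A * msum q p F n"
  using F
proof (induction n)
  case 0 then show ?case using A by simp
next
  case (Suc n)
  have c: "msum q p F n \<in> carrier_mat q p" using Suc.prems by (intro msum_carrier) auto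
  have "msum m p (\<lambda>g. A * F g) (Suc n) = A * msum q p F n + A * F n"
    using Suc by simp
  also have "\<dots> = A * (msum q p F n + F n)"
    using A c Suc.prems by (simp add: mult_add_distrib_mat)
  finally show ?case by simp
qed

lemma msum_mult_right:
  assumes B: "B \<in> carrier_mat q p" and F: "\<And>g. g < n \<Longrightarrow> F g \<in> carrier_mat m q"
  shows "msum m p (\<lambda>g. F g * B) n = msum m q F n * B"
  using F
proof (induction n)
  case 0 then show ?case using B by simp
next
  case (Suc n)
  have c: "msum m q F n \<in> carrier_mat m q" using Suc.prems by (intro msum_carrier) auto
  have "msum m p (\<lambda>g. F g * B) (Suc n) = msum m q F n * B + F n * B"
    using Suc by simp
  also have "\<dots> = (msum m q F n + F n) * B"
    using B c Suc.prems by (simp add: add_mult_distrib_mat)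
  finally show ?case by simp
qed

lemma msum_cH:
  assumes F: "\<And>g. g < n \<Longrightarrow> F g \<in> carrier_mat m p"
  shows "cH (msum m p F n) = msum p m (\<lambda>g. cH (F g)) n"
  using F
proof (induction n)
  case 0 then show ?case by simp
next
  case (Suc n)
  have c: "msum m p F n \<in> carrier_mat m p" using Suc.prems by (intro msum_carrier) auto
  show ?case using Suc c by (simp add: cH_add)
qed

lemma tr_inv_nonneg:
  assumes B: "B \<in> carrier_mat n n"
  shows "tr_inv (B * cH B) \<ge> 0"
proof (cases "mat_inverse (B * cH B)")
  case None then show ?thesis by (simp add: tr_inv_def)
next
  case (Some Y)
  have M: "B * cH B \<in> carrier_mat n n" using B by simp
  from mat_inverse(2)[OF M Some] have MY: "B * cH B * Y = 1\<^sub>m n" and YM: "Y * (B * cH B) = 1\<^sub>m n"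
    and Y: "Y \<in> carrier_mat n n" by blast+
  define C where "C = cH B * Y"
  have C: "C \<in> carrier_mat n n" unfolding C_def by (rule mult_carrier_mat[OF cH_carrier[OF B] Y])
  have BC: "B * C = 1\<^sub>m n" using MY assoc_mult_mat[OF B cH_carrier[OF B] Y] unfolding C_def by simp
  have CB: "C * B = 1\<^sub>m n" by (rule mat_mult_left_right_inverse[OF B C BC])
  have hC: "cH C \<in> carrier_mat n n" using C by simp
  have hB: "cH B \<in> carrier_mat n n" using B by simp
  have CC: "cH C * C \<in> carrier_mat n n" by (rule mult_carrier_mat[OF hC C])
  have "cH C * C * (B * cH B) = (cH C * C * B) * cH B"
    using assoc_mult_mat[OF CC B hB] by simp
  also have "cH C * C * B = cH C * (C * B)" using assoc_mult_mat[OF hC C B] .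
  also have "cH C * (C * B) * cH B = cH (B * C)" using B C CB hC by (simp add: cH_mult)
  finally have inv: "cH C * C * (B * cH B) = 1\<^sub>m n" using BC by simp
  have "Y = (cH C * C * (B * cH B)) * Y" using inv Y by simp
  also have "\<dots> = cH C * C * (B * cH B * Y)"
    using assoc_mult_mat[OF CC M Y] .
  also have "\<dots> = cH C * cH (cH C)" using MY C by simp
  finally have "Y = cH C * cH (cH C)" .
  then have "Re (mtrace Y) \<ge> 0" using trace_nonneg[OF hC] by simp
  then show ?thesis using Some by (simp add: tr_inv_def)
qed

lemma gram_eq:
  assumes "A \<in> carrier_mat l r" "H \<in> carrier_mat r l"
  shows "A * H * cH H * cH A = (A * H) * cH (A * H)"
  using assoc_mult_mat[OF mult_carrier_mat[OF assms] cH_carrier[OF assms(2)] cH_carrier[OF assms(1)]]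
    cH_mult[OF assms] by simp

lemma fobj_mono:
  assumes G: "G \<ge> 1" and K: "K \<ge> 1"
    and A: "A \<in> carrier_mat L Nr" and A': "A' \<in> carrier_mat L Nr"
    and Hc: "\<And>g k. g < G \<Longrightarrow> k < K \<Longrightarrow> H g k \<in> carrier_mat Nr L"
    and eq: "\<And>g k. g < G \<Longrightarrow> k < K \<Longrightarrow> A' * H g k = A * H g k"
    and tr: "Re (mtrace (A' * cH A')) \<le> Re (mtrace (A * cH A))"
  shows "fobj G K H A' \<le> fobj G K H A"
proof -
  have M: "A' * H g k * cH (H g k) * cH A' = A * H g k * cH (H g k) * cH A'" if "g < G" "k < K" for g k
    using eq[OF that] by simp
  have M: "A' * H g k * cH (H g k) * cH A' = A * H g k * cH (H g k) * cH A" if "g < G" "k < K" for g k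
  proof -
    have "A' * H g k * cH (H g k) * cH A' = (A' * H g k) * cH (A' * H g k)"
      using A' Hc[OF that] by (rule gram_eq)
    also have "\<dots> = (A * H g k) * cH (A * H g k)" using eq[OF that] by simp
    also have "\<dots> = A * H g k * cH (H g k) * cH A"
      using A Hc[OF that] by (rule gram_eq[symmetric])
    finally show ?thesis .
  qed
  define S where "S = {tr_inv (A * H g k * cH (H g k) * cH A) | g k. g < G \<and> k < K}"
  have S': "{tr_inv (A' * H g k * cH (H g k) * cH A') | g k. g < G \<and> k < K} = S"
    unfolding S_def
  proof (intro equalityI subsetI)
    fix x assume "x \<in> {tr_inv (A' * H g k * cH (H g k) * cH A') |g k. g < G \<and> k < K}"
    then obtain g k where gk: "g < G" "k < K" "x = tr_inv (A' * H g k * cH (H g k) * cH A')" by blast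
    then have "x = tr_inv (A * H g k * cH (H g k) * cH A)" using M[OF gk(1,2)] by simp
    then show "x \<in> {tr_inv (A * H g k * cH (H g k) * cH A) |g k. g < G \<and> k < K}" using gk by blast
  next
    fix x assume "x \<in> {tr_inv (A * H g k * cH (H g k) * cH A) |g k. g < G \<and> k < K}"
    then obtain g k where gk: "g < G" "k < K" "x = tr_inv (A * H g k * cH (H g k) * cH A)" by blast
    then have "x = tr_inv (A' * H g k * cH (H g k) * cH A')" using M[OF gk(1,2)] by simp
    then show "x \<in> {tr_inv (A' * H g k * cH (H g k) * cH A') |g k. g < G \<and> k < K}" using gk by blast
  qed
  have fin: "finite S" unfolding S_def by (rule finite_image_set2) auto
  have mem: "tr_inv (A * H 0 0 * cH (H 0 0) * cH A) \<in> S" unfolding S_def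
    by (rule CollectI, rule exI[of _ 0], rule exI[of _ 0]) (use G K in auto)
  have "tr_inv (A * H 0 0 * cH (H 0 0) * cH A) \<ge> 0"
    using gram_eq[OF A Hc[of 0 0]] tr_inv_nonneg[of "A * H 0 0" L] A Hc[of 0 0] G K by simp
  then have m0: "Max S \<ge> 0" using Max_ge[OF fin mem] by (rule order.trans)
  have t0: "Re (mtrace (A' * cH A')) \<ge> 0" using A' by (rule trace_nonneg)
  have cond: "(\<exists>g<G. \<exists>k<K. \<not> invertible_mat (A' * H g k * cH (H g k) * cH A')) =
      (\<exists>g<G. \<exists>k<K. \<not> invertible_mat (A * H g k * cH (H g k) * cH A))"
  proof
    assume "\<exists>g<G. \<exists>k<K. \<not> invertible_mat (A' * H g k * cH (H g k) * cH A')"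
    then obtain g k where gk: "g < G" "k < K" "\<not> invertible_mat (A' * H g k * cH (H g k) * cH A')" by blast
    then have "\<not> invertible_mat (A * H g k * cH (H g k) * cH A)" using M[OF gk(1,2)] by simp
    then show "\<exists>g<G. \<exists>k<K. \<not> invertible_mat (A * H g k * cH (H g k) * cH A)" using gk by blast
  next
    assume "\<exists>g<G. \<exists>k<K. \<not> invertible_mat (A * H g k * cH (H g k) * cH A)"
    then obtain g k where gk: "g < G" "k < K" "\<not> invertible_mat (A * H g k * cH (H g k) * cH A)" by blast
    then have "\<not> invertible_mat (A' * H g k * cH (H g k) * cH A')" using M[OF gk(1,2)] by simp
    then show "\<exists>g<G. \<exists>k<K. \<not> invertible_mat (A' * H g k * cH (H g k) * cH A')" using gk by blast
  qed
  show ?thesis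
  proof (cases "\<exists>g<G. \<exists>k<K. \<not> invertible_mat (A * H g k * cH (H g k) * cH A)")
    case True
    then have "fobj G K H A = \<infinity>" unfolding fobj_def by (simp only: if_True)
    then show ?thesis by simp
  next
    case False
    then have F': "\<not> (\<exists>g<G. \<exists>k<K. \<not> invertible_mat (A' * H g k * cH (H g k) * cH A'))"
      using cond by simp
    have e1: "fobj G K H A = ereal (Re (mtrace (A * cH A))) * Max S"
      unfolding fobj_def S_def using False by (simp only: if_False)
    have e2: "fobj G K H A' = ereal (Re (mtrace (A' * cH A'))) * Max S"
      unfolding fobj_def S'[symmetric] using F' by (simp only: if_False)
    show ?thesis unfolding e1 e2
      by (rule ereal_mult_right_mono) (use tr m0 in simp_all)
  qed
qed

theorem proposition1:
  fixes G K L Nr :: nat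
    and R :: "nat \<Rightarrow> nat"
    and U :: "nat \<Rightarrow> complex mat"
    and Lam :: "nat \<Rightarrow> real mat"
    and W :: "nat \<Rightarrow> nat \<Rightarrow> complex mat"
  assumes "G \<ge> 1" "K \<ge> 1" "L \<ge> 1" "Nr \<ge> 1"
    and "\<And>g. g < G \<Longrightarrow> R g \<ge> L"
    and "\<And>g. g < G \<Longrightarrow> U g \<in> carrier_mat Nr (R g)"
    and "\<And>g. g < G \<Longrightarrow> cH (U g) * U g = 1\<^sub>m (R g)"
    and "\<And>g. g < G \<Longrightarrow> Lam g \<in> carrier_mat (R g) (R g)"
    and "\<And>g. g < G \<Longrightarrow> diagonal_mat (Lam g)"
    and "\<And>g i. g < G \<Longrightarrow> i < R g \<Longrightarrow> Lam g $$ (i, i) > 0"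
    and "\<And>g g'. g < G \<Longrightarrow> g' < G \<Longrightarrow> g \<noteq> g' \<Longrightarrow> cH (U g) * U g' = 0\<^sub>m (R g) (R g')"
    and "\<And>g k. g < G \<Longrightarrow> k < K \<Longrightarrow> W g k \<in> carrier_mat (R g) L"
  shows "(\<forall>A \<in> carrier_mat L Nr. \<exists>C. (\<forall>g<G. C g \<in> carrier_mat (R g) L) \<and>
            fobj G K (chan U Lam W) (msum L Nr (\<lambda>g. cH (C g) * cH (U g)) G)
              \<le> fobj G K (chan U Lam W) A)
       \<and> ((\<exists>A0 \<in> carrier_mat L Nr. \<forall>A \<in> carrier_mat L Nr.
              fobj G K (chan U Lam W) A0 \<le> fobj G K (chan U Lam W) A)
          \<longrightarrow> (\<exists>C. (\<forall>g<G. C g \<in> carrier_mat (R g) L) \<and>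
                (\<forall>A \<in> carrier_mat L Nr.
                   fobj G K (chan U Lam W) (msum L Nr (\<lambda>g. cH (C g) * cH (U g)) G)
                     \<le> fobj G K (chan U Lam W) A)))"
proof -
  define H where "H = chan U Lam W"
  define P where "P = msum Nr Nr (\<lambda>g. U g * cH (U g)) G"
  have Uc: "\<And>g. g < G \<Longrightarrow> U g \<in> carrier_mat Nr (R g)" by fact
  have UUc: "\<And>g. g < G \<Longrightarrow> U g * cH (U g) \<in> carrier_mat Nr Nr"
    by (rule mult_carrier_mat[OF Uc cH_carrier[OF Uc]])
  have Pc: "P \<in> carrier_mat Nr Nr" unfolding P_def using UUc by (rule msum_carrier)
  have Dc: "\<And>g. g < G \<Longrightarrow> diag_sqrt (Lam g) \<in> carrier_mat (R g) (R g)"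
    using assms(8) unfolding diag_sqrt_def carrier_mat_def by simp
  have Hform: "H g k = U g * (diag_sqrt (Lam g) * W g k)" if "g < G" "k < K" for g k
    unfolding H_def chan_def using Uc[OF that(1)] Dc[OF that(1)] assms(12)[OF that]
    by (rule assoc_mult_mat)
  have Hc: "H g k \<in> carrier_mat Nr L" if "g < G" "k < K" for g k
    using Hform[OF that] Uc[OF that(1)] Dc[OF that(1)] assms(12)[OF that] by simp
  have PU: "P * U g = U g" if g: "g < G" for g
  proof -
    have "P * U g = msum Nr (R g) (\<lambda>g'. U g' * cH (U g') * U g) G"
      unfolding P_def using Uc[OF g] UUc by (rule msum_mult_right[symmetric])
    also have "msum Nr (R g) (\<lambda>g'. U g' * cH (U g') * U g) n = (if g < n then U g else 0\<^sub>m Nr (R g))"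
      if "n \<le> G" for n
      using that
    proof (induction n)
      case 0 then show ?case by simp
    next
      case (Suc n)
      have n: "n < G" using Suc by simp
      have t: "U n * cH (U n) * U g = U n * (cH (U n) * U g)"
        using assoc_mult_mat[OF Uc[OF n] cH_carrier[OF Uc[OF n]] Uc[OF g]] .
      show ?case
      proof (cases "n = g")
        case True
        then show ?thesis using Suc t assms(7)[OF g] Uc[OF g] by simp
      next
        case False
        then have "U n * cH (U n) * U g = 0\<^sub>m Nr (R g)"
          using t assms(11)[OF n g] Uc[OF n] by simp
        then show ?thesis using Suc False Uc[OF g] by auto
      qed
    qed
    finally show ?thesis using g by simp
  qed
  have hP: "cH P = P"
  proof -
    have "cH P = msum Nr Nr (\<lambda>g. cH (U g * cH (U g))) G"
      unfolding P_def using UUc by (rule msum_cH)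
    also have "\<dots> = P" unfolding P_def
      by (rule msum_cong) (use cH_mult[OF Uc cH_carrier[OF Uc]] in simp)
    finally show ?thesis .
  qed
  have iP: "P * P = P"
  proof -
    have "msum Nr Nr (\<lambda>g. P * (U g * cH (U g))) G = P * msum Nr Nr (\<lambda>g. U g * cH (U g)) G"
      by (rule msum_mult_left[OF Pc UUc])
    then have "P * P = msum Nr Nr (\<lambda>g. P * (U g * cH (U g))) G" unfolding P_def[symmetric] by simp
    also have "\<dots> = msum Nr Nr (\<lambda>g. U g * cH (U g)) G"
      apply (rule msum_cong)
      using assoc_mult_mat[OF Pc Uc cH_carrier[OF Uc]] PU by simp
    finally show ?thesis unfolding P_def[symmetric] .
  qed
  have main: "\<exists>C. (\<forall>g<G. C g \<in> carrier_mat (R g) L) \<and>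
            fobj G K H (msum L Nr (\<lambda>g. cH (C g) * cH (U g)) G) \<le> fobj G K H A"
    if A: "A \<in> carrier_mat L Nr" for A
  proof (intro exI conjI allI impI)
    define C where "C = (\<lambda>g. cH (A * U g))"
    show "C g \<in> carrier_mat (R g) L" if "g < G" for g
      unfolding C_def using A Uc[OF that] by simp
    have "msum L Nr (\<lambda>g. cH (C g) * cH (U g)) G = msum L Nr (\<lambda>g. A * (U g * cH (U g))) G"
      unfolding C_def by (intro msum_cong) (use assoc_mult_mat[OF A Uc cH_carrier[OF Uc]] in simp)
    also have "\<dots> = A * P" unfolding P_def using A UUc by (rule msum_mult_left)
    finally have eqA: "msum L Nr (\<lambda>g. cH (C g) * cH (U g)) G = A * P" .
    have "fobj G K H (A * P) \<le> fobj G K H A"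
    proof (rule fobj_mono[OF assms(1,2) A _ Hc])
      show "A * P \<in> carrier_mat L Nr" using A Pc by simp
      show "Re (mtrace (A * P * cH (A * P))) \<le> Re (mtrace (A * cH A))"
        using Pc hP iP A by (rule proj_trace)
      fix g k assume gk: "g < G" "k < K"
      define Y where "Y = diag_sqrt (Lam g) * W g k"
      have Y: "Y \<in> carrier_mat (R g) L" unfolding Y_def using Dc[OF gk(1)] assms(12)[OF gk] by simp
      have "A * P * (U g * Y) = A * (P * (U g * Y))"
        using assoc_mult_mat[OF A Pc mult_carrier_mat[OF Uc[OF gk(1)] Y]] .
      also have "P * (U g * Y) = P * U g * Y"
        using assoc_mult_mat[OF Pc Uc[OF gk(1)] Y] by simp
      also have "\<dots> = U g * Y" using PU[OF gk(1)] by simp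
      finally show "A * P * H g k = A * H g k" using Hform[OF gk] Y_def by simp
    qed
    then show "fobj G K H (msum L Nr (\<lambda>g. cH (C g) * cH (U g)) G) \<le> fobj G K H A"
      using eqA by simp
  qed
  show ?thesis
    unfolding H_def[symmetric]
  proof (intro conjI impI ballI)
    fix A :: "complex mat" assume "A \<in> carrier_mat L Nr"
    then show "\<exists>C. (\<forall>g<G. C g \<in> carrier_mat (R g) L) \<and>
            fobj G K H (msum L Nr (\<lambda>g. cH (C g) * cH (U g)) G) \<le> fobj G K H A"
      by (rule main)
  next
    assume "\<exists>A0\<in>carrier_mat L Nr. \<forall>A\<in>carrier_mat L Nr. fobj G K H A0 \<le> fobj G K H A"
    then obtain A0 where A0: "A0 \<in> carrier_mat L Nr"
      and min: "\<forall>A\<in>carrier_mat L Nr. fobj G K H A0 \<le> fobj G K H A" by blast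
    from main[OF A0] obtain C where C: "\<forall>g<G. C g \<in> carrier_mat (R g) L"
      and le: "fobj G K H (msum L Nr (\<lambda>g. cH (C g) * cH (U g)) G) \<le> fobj G K H A0" by blast
    show "\<exists>C. (\<forall>g<G. C g \<in> carrier_mat (R g) L) \<and>
      (\<forall>A\<in>carrier_mat L Nr. fobj G K H (msum L Nr (\<lambda>g. cH (C g) * cH (U g)) G) \<le> fobj G K H A)"
      using C le min by (meson order.trans)
  qed
qed

end
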